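(* Let $q,n,a,h,t$ be positive integers with $a\le q-1$, $h\le n$, $a\le t\le ah$, and suppose $t+1$ divides $q$. For $j\in\{0,1,\dots,t\}$ let $$\mathcal C_q^{(j)}(n;t)=\Big\{\mathbf x\in[q]^n:\ \sum_{i=1}^n x_i\equiv j\pmod{t+1}\Big\}.$$ Then for every $j\in\{0,1,\dots,t\}$, $\mathcal C_q^{(j)}(n;t)$ is an optimal $(a,h,t)^\circ$-AED code in $[q]^n$, i.e., it is $(a,h,t)^\circ$-AED and no $(a,h,t)^\circ$-AED code in $[q]^n$ has larger cardinality (its cardinality being $\frac{q^n}{t+1}$).
   Context: $[q]=\{0,1,\dots,q-1\}$ and $+_q$ denotes coordinatewise addition modulo $q$. Cyclic asymmetric channel: an input $\mathbf x\in[q]^n$ can produce any output $\mathbf y=\mathbf x+_q\mathbf f$, where $\mathbf f\in[q]^n$ satisfies (1) $0\le f_i\le a$ for all $i$; (2) $\sum_{i=1}^n\mathbb 1_{\{f_i\ne0\}}\le h$; (3) $\sum_{i=1}^n f_i\le t$. These are called $(a,h,t)^\circ$-asymmetric errors; $\mathrm{Out}^\circ(\mathbf x)$ denotes the set of all such outputs. A code $\mathcal C\subseteq[q]^n$ is $(a,h,t)^\circ$-AED if for all $\mathbf x\in\mathcal C$ and $\mathbf y\in\mathrm{Out}^\circ(\mathbf x)$ with $\mathbf y\ne\mathbf x$, we have $\mathbf y\notin\mathcal C$. *)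

theory Defs
  imports Main
begin

text \<open>Words of length n over [q] = {0..q-1}, represented as functions nat => nat
  with entries below q at positions < n and equal to 0 elsewhere.\<close>
definition words :: "nat \<Rightarrow> nat \<Rightarrow> (nat \<Rightarrow> nat) set" where
  "words q n = {x. (\<forall>i<n. x i < q) \<and> (\<forall>i\<ge>n. x i = 0)}"

definition err_vecs :: "nat \<Rightarrow> nat \<Rightarrow> nat \<Rightarrow> nat \<Rightarrow> nat \<Rightarrow> (nat \<Rightarrow> nat) set" where
  "err_vecs q n a h t = {f. f \<in> words q n \<and> (\<forall>i<n. f i \<le> a)
      \<and> card {i. i < n \<and> f i \<noteq> 0} \<le> h \<and> (\<Sum>i<n. f i) \<le> t}"

definition add_mod :: "nat \<Rightarrow> nat \<Rightarrow> (nat \<Rightarrow> nat) \<Rightarrow> (nat \<Rightarrow> nat) \<Rightarrow> (nat \<Rightarrow> nat)" where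
  "add_mod q n x f = (\<lambda>i. if i < n then (x i + f i) mod q else 0)"

definition Out_cyc :: "nat \<Rightarrow> nat \<Rightarrow> nat \<Rightarrow> nat \<Rightarrow> nat \<Rightarrow> (nat \<Rightarrow> nat) \<Rightarrow> (nat \<Rightarrow> nat) set" where
  "Out_cyc q n a h t x = add_mod q n x ` err_vecs q n a h t"

definition is_AED :: "nat \<Rightarrow> nat \<Rightarrow> nat \<Rightarrow> nat \<Rightarrow> nat \<Rightarrow> (nat \<Rightarrow> nat) set \<Rightarrow> bool" where
  "is_AED q n a h t C \<longleftrightarrow> C \<subseteq> words q n \<and>
     (\<forall>x\<in>C. \<forall>y\<in>Out_cyc q n a h t x. y \<noteq> x \<longrightarrow> y \<notin> C)"

definition sum_code :: "nat \<Rightarrow> nat \<Rightarrow> nat \<Rightarrow> nat \<Rightarrow> (nat \<Rightarrow> nat) set" where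
  "sum_code q n t j = {x \<in> words q n. (\<Sum>i<n. x i) mod (t + 1) = j}"

end

theory Submission
  imports Defs "HOL-Number_Theory.Cong"
begin

lemma mod_cancel_aux:
  fixes a b c q :: nat
  assumes "(a + c) mod q = (b + c) mod q" "a < q" "b < q"
  shows "a = b"
proof -
  have "[a + c = b + c] (mod q)" using assms(1) by (simp add: cong_def)
  hence "[a = b] (mod q)" by (simp add: cong_add_rcancel_nat)
  thus ?thesis using assms cong_less_imp_eq_nat by blast
qed

lemma mod_zero_aux:
  fixes A B m :: nat
  assumes "(A + B) mod m = A mod m"
  shows "B mod m = 0"
proof -
  have "[A + B = A + 0] (mod m)" using assms by (simp add: cong_def)
  hence "[B = 0] (mod m)" by (simp only: cong_add_lcancel_nat)
  thus ?thesis by (simp add: cong_def)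
qed

lemma words_card: "finite (words q n) \<and> card (words q n) = q ^ n"
proof (induction n)
  case 0
  have "words q 0 = {\<lambda>_. 0}" by (auto simp: words_def)
  thus ?case by simp
next
  case (Suc n)
  let ?g = "\<lambda>(x, c). x(n := c)"
  have inj: "inj_on ?g (words q n \<times> {..<q})"
  proof (rule inj_onI, clarify)
    fix x c x' c'
    assume w: "x \<in> words q n" "x' \<in> words q n" and e: "x(n := c) = x'(n := c')"
    have c: "c = c'" using fun_cong[OF e, of n] by simp
    have "x = x'"
    proof
      fix i show "x i = x' i"
      proof (cases "i = n")
        case True thus ?thesis using w by (simp add: words_def)
      next
        case False thus ?thesis using fun_cong[OF e, of i] by simp
      qed
    qed
    thus "x = x' \<and> c = c'" using c by simp
  qed
  have img: "?g ` (words q n \<times> {..<q}) = words q (Suc n)"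
  proof
    show "?g ` (words q n \<times> {..<q}) \<subseteq> words q (Suc n)"
      by (auto simp: words_def less_Suc_eq)
    show "words q (Suc n) \<subseteq> ?g ` (words q n \<times> {..<q})"
    proof
      fix y assume y: "y \<in> words q (Suc n)"
      have "y = ?g (y(n := 0), y n)" by simp
      moreover have "(y(n := 0), y n) \<in> words q n \<times> {..<q}"
        using y by (auto simp: words_def)
      ultimately show "y \<in> ?g ` (words q n \<times> {..<q})" by blast
    qed
  qed
  have fA: "finite (words q n \<times> {..<q})" using Suc by simp
  have cA: "card (words q n \<times> {..<q}) = q ^ Suc n" using Suc by (simp add: card_cartesian_product)
  have "finite (words q (Suc n))" using finite_imageI[OF fA, of ?g] unfolding img .
  moreover have "card (words q (Suc n)) = q ^ Suc n" using card_image[OF inj] cA unfolding img by simp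
  ultimately show ?case by simp
qed

definition vec :: "nat \<Rightarrow> nat \<Rightarrow> nat \<Rightarrow> nat \<Rightarrow> nat" where
  "vec a h k = (\<lambda>i. if i < h then min a (k - a * i) else 0)"

lemma vec_sum_h: "(\<Sum>i<h. min a (k - a * i)) = min k (a * (h::nat))"
proof (induction h)
  case 0 then show ?case by simp
next
  case (Suc h)
  have "(\<Sum>i<Suc h. min a (k - a * i)) = min k (a * h) + min a (k - a * h)"
    using Suc by simp
  also have "\<dots> = min k (a * Suc h)"
    by (cases "k \<le> a * h") (auto simp: min_def)
  finally show ?case .
qed

lemma vec_sum: assumes "h \<le> n" shows "(\<Sum>i<n. vec a h k i) = min k (a * h)"
proof -
  have "(\<Sum>i<n. vec a h k i) = (\<Sum>i<h. vec a h k i)"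
    using assms by (intro sum.mono_neutral_right) (auto simp: vec_def)
  also have "\<dots> = (\<Sum>i<h. min a (k - a * i))" by (simp add: vec_def)
  finally show ?thesis by (simp add: vec_sum_h)
qed

lemma vec_mono: "k \<le> l \<Longrightarrow> vec a h k i \<le> vec a h l i"
  by (auto simp: vec_def)

lemma vec_le: "vec a h k i \<le> a"
  by (auto simp: vec_def)

lemma add_mod_words: "0 < q \<Longrightarrow> add_mod q n z v \<in> words q n"
  by (auto simp: add_mod_def words_def)

lemma add_mod_inj: "inj_on (\<lambda>z. add_mod q n z v) (words q n)"
proof (rule inj_onI)
  fix z z' assume z: "z \<in> words q n" "z' \<in> words q n" and e: "add_mod q n z v = add_mod q n z' v"
  show "z = z'"
  proof
    fix i
    show "z i = z' i"
    proof (cases "i < n")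
      case True
      have "(z i + v i) mod q = (z' i + v i) mod q" using e True
        by (metis add_mod_def)
      moreover have "z i < q" "z' i < q" using z True by (auto simp: words_def)
      ultimately show ?thesis by (rule mod_cancel_aux)
    next
      case False thus ?thesis using z by (auto simp: words_def)
    qed
  qed
qed

lemma add_mod_img: "0 < q \<Longrightarrow> (\<lambda>z. add_mod q n z v) ` (words q n) = words q n"
proof -
  assume q: "0 < q"
  have "(\<lambda>z. add_mod q n z v) ` (words q n) \<subseteq> words q n"
    using add_mod_words[OF q] by (rule image_subsetI)
  thus ?thesis by (rule endo_inj_surj[OF conjunct1[OF words_card] _ add_mod_inj])
qed

lemma preimage_card:
  assumes "0 < q" "C \<subseteq> words q n"
  shows "card {z \<in> words q n. add_mod q n z v \<in> C} = card C"
proof -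
  let ?T = "\<lambda>z. add_mod q n z v"
  have img: "?T ` words q n = words q n" by (rule add_mod_img[OF assms(1)])
  have eqC: "?T ` {z \<in> words q n. ?T z \<in> C} = C"
  proof
    show "?T ` {z \<in> words q n. ?T z \<in> C} \<subseteq> C" by auto
    show "C \<subseteq> ?T ` {z \<in> words q n. ?T z \<in> C}"
    proof
      fix c assume c: "c \<in> C"
      hence "c \<in> ?T ` words q n" using img assms(2) by auto
      then obtain z where "z \<in> words q n" "c = ?T z" by auto
      thus "c \<in> ?T ` {z \<in> words q n. ?T z \<in> C}" using c by auto
    qed
  qed
  have injA: "inj_on ?T {z \<in> words q n. ?T z \<in> C}"
    using add_mod_inj by (rule inj_on_subset) auto
  have "card (?T ` {z \<in> words q n. ?T z \<in> C}) = card {z \<in> words q n. ?T z \<in> C}"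
    by (rule card_image[OF injA])
  thus ?thesis unfolding eqC by (rule sym)
qed

lemma key:
  fixes q n a h t :: nat
  assumes "0 < q" "a \<le> q - 1" "h \<le> n" "t \<le> a * h"
    and z: "z \<in> words q n" and kl: "k < l" "l \<le> t"
  shows "add_mod q n z (vec a h l) \<in> Out_cyc q n a h t (add_mod q n z (vec a h k))
       \<and> add_mod q n z (vec a h l) \<noteq> add_mod q n z (vec a h k)"
proof
  let ?f = "\<lambda>i. vec a h l i - vec a h k i"
  have mono: "\<And>i. vec a h k i \<le> vec a h l i" using kl by (simp add: vec_mono)
  have eq: "add_mod q n (add_mod q n z (vec a h k)) ?f = add_mod q n z (vec a h l)"
  proof
    fix i
    have "z i + vec a h k i + ?f i = z i + vec a h l i" using mono[of i] by simp
    hence "((z i + vec a h k i) mod q + ?f i) mod q = (z i + vec a h l i) mod q"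
      by (metis mod_add_left_eq)
    thus "add_mod q n (add_mod q n z (vec a h k)) ?f i = add_mod q n z (vec a h l) i"
      by (simp only: add_mod_def) simp
  qed
  moreover have fe: "?f \<in> err_vecs q n a h t"
  proof -
    have "?f \<in> words q n"
    proof -
      have "\<And>i. ?f i < q"
      proof -
        fix i
        have "?f i \<le> a" using vec_le[of a h l i] by linarith
        thus "?f i < q" using assms(1,2) by linarith
      qed
      moreover have "\<And>i. i \<ge> n \<Longrightarrow> ?f i = 0" using assms(3) by (simp add: vec_def)
      ultimately show ?thesis by (simp add: words_def)
    qed
    moreover have "\<forall>i<n. ?f i \<le> a" using vec_le[of a h l] by (meson diff_le_self le_trans)
    moreover have "card {i. i < n \<and> ?f i \<noteq> 0} \<le> h"
    proof -
      have "{i. i < n \<and> ?f i \<noteq> 0} \<subseteq> {..<h}" by (auto simp: vec_def)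
      thus ?thesis by (metis card_lessThan card_mono finite_lessThan)
    qed
    moreover have "(\<Sum>i<n. ?f i) \<le> t"
    proof -
      have "(\<Sum>i<n. ?f i) = (\<Sum>i<n. vec a h l i) - (\<Sum>i<n. vec a h k i)"
        using mono by (simp add: sum_subtractf_nat)
      also have "\<dots> = l - k" using vec_sum[OF assms(3)] kl assms(4) by simp
      finally show ?thesis using kl by simp
    qed
    ultimately show ?thesis by (simp only: err_vecs_def mem_Collect_eq)
  qed
  show "add_mod q n z (vec a h l) \<in> Out_cyc q n a h t (add_mod q n z (vec a h k))"
    unfolding Out_cyc_def by (rule image_eqI[where f="add_mod q n (add_mod q n z (vec a h k))", OF eq[symmetric] fe])
next
  show "add_mod q n z (vec a h l) \<noteq> add_mod q n z (vec a h k)"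
  proof
    assume e: "add_mod q n z (vec a h l) = add_mod q n z (vec a h k)"
    have lt: "\<And>k i. vec a h k i < q"
    proof -
      fix k i have "vec a h k i \<le> a" by (rule vec_le)
      thus "vec a h k i < q" using assms(1,2) by linarith
    qed
    have "\<forall>i<n. vec a h l i = vec a h k i"
    proof (intro allI impI)
      fix i assume "i < n"
      hence "(vec a h l i + z i) mod q = (vec a h k i + z i) mod q"
        using fun_cong[OF e, of i] by (simp add: add_mod_def add.commute)
      thus "vec a h l i = vec a h k i" using lt[of l i] lt[of k i] by (rule mod_cancel_aux)
    qed
    hence "(\<Sum>i<n. vec a h l i) = (\<Sum>i<n. vec a h k i)" by (intro sum.cong) auto
    hence "min l (a * h) = min k (a * h)"
      using vec_sum[OF assms(3), of a l] vec_sum[OF assms(3), of a k] by simp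
    thus False using kl assms(4) by (simp add: min_def split: if_splits)
  qed
qed

lemma card_ind: "finite A \<Longrightarrow> card {x\<in>A. P x} = (\<Sum>x\<in>A. if P x then 1 else (0::nat))"
proof -
  assume f: "finite A"
  have "(\<Sum>x\<in>A. if P x then 1 else (0::nat)) = sum (\<lambda>_. 1) {x\<in>A. P x}"
    by (rule sum.inter_filter[OF f, symmetric])
  thus ?thesis by (simp only: card_eq_sum[of "{x\<in>A. P x}"])
qed

lemma optimal:
  fixes q n a h t :: nat
  assumes "0 < q" "a \<le> q - 1" "h \<le> n" "t \<le> a * h"
    and C: "is_AED q n a h t C"
  shows "(t + 1) * card C \<le> q ^ n"
proof -
  let ?W = "words q n"
  let ?T = "\<lambda>k z. add_mod q n z (vec a h k)"
  have CW: "C \<subseteq> ?W" using C by (simp add: is_AED_def)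
  have finW: "finite ?W" using words_card by blast
  have one: "card {k \<in> {..t}. ?T k z \<in> C} \<le> 1" if z: "z \<in> ?W" for z
  proof -
    have "\<forall>k1\<in>{k \<in> {..t}. ?T k z \<in> C}. \<forall>k2\<in>{k \<in> {..t}. ?T k z \<in> C}. k1 = k2"
    proof (intro ballI, rule ccontr)
      fix k1 k2 assume k1: "k1 \<in> {k \<in> {..t}. ?T k z \<in> C}" and k2: "k2 \<in> {k \<in> {..t}. ?T k z \<in> C}"
        and ne: "k1 \<noteq> k2"
      have gen: False if "k < l" "k \<in> {k \<in> {..t}. ?T k z \<in> C}" "l \<in> {k \<in> {..t}. ?T k z \<in> C}" for k l
      proof -
        have kl: "k < l" "l \<le> t" using that by auto
        have ck: "?T k z \<in> C" and cl: "?T l z \<in> C" using that by auto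
        have o: "?T l z \<in> Out_cyc q n a h t (?T k z)" and ne2: "?T l z \<noteq> ?T k z"
          using key[OF assms(1-4) z kl] by auto
        have all: "\<forall>x\<in>C. \<forall>y\<in>Out_cyc q n a h t x. y \<noteq> x \<longrightarrow> y \<notin> C"
          using C by (simp add: is_AED_def)
        have "?T l z \<notin> C" using bspec[OF bspec[OF all ck] o] ne2 by simp
        thus False using cl by simp
      qed
      from ne have "k1 < k2 \<or> k2 < k1" by arith
      thus False using k1 k2 gen by blast
    qed
    thus ?thesis using card_le_Suc0_iff_eq[of "{k \<in> {..t}. ?T k z \<in> C}"] by simp
  qed
  have "(t + 1) * card C = (\<Sum>k\<le>t. card C)" by simp
  also have "\<dots> = (\<Sum>k\<le>t. card {z \<in> ?W. ?T k z \<in> C})"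
    using preimage_card[OF assms(1) CW] by simp
  also have "\<dots> = (\<Sum>k\<le>t. \<Sum>z\<in>?W. if ?T k z \<in> C then 1 else 0)"
    by (intro sum.cong refl card_ind finW)
  also have "\<dots> = (\<Sum>z\<in>?W. \<Sum>k\<le>t. if ?T k z \<in> C then 1 else 0)"
    by (rule sum.swap)
  also have "\<dots> = (\<Sum>z\<in>?W. card {k \<in> {..t}. ?T k z \<in> C})"
    by (intro sum.cong refl card_ind[symmetric]) simp
  also have "\<dots> \<le> (\<Sum>z\<in>?W. 1)" using one by (intro sum_mono) auto
  also have "\<dots> = q ^ n" using words_card by simp
  finally show ?thesis .
qed



lemma shift_le:
  fixes q n m j :: nat
  assumes q: "0 < q" and n: "0 < n" and m: "m dvd q" "0 < m" and j: "j < m"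
  shows "card {x \<in> words q n. (\<Sum>i<n. x i) mod m = j}
       \<le> card {x \<in> words q n. (\<Sum>i<n. x i) mod m = Suc j mod m}"
proof -
  let ?S = "\<lambda>x. x(0 := (x 0 + 1) mod q)"
  let ?A = "{x \<in> words q n. (\<Sum>i<n. x i) mod m = j}"
  let ?B = "{x \<in> words q n. (\<Sum>i<n. x i) mod m = Suc j mod m}"
  have inj: "inj_on ?S ?A"
  proof (rule inj_onI)
    fix x y assume x: "x \<in> ?A" and y: "y \<in> ?A" and e: "?S x = ?S y"
    have "(x 0 + 1) mod q = (y 0 + 1) mod q" using fun_cong[OF e, of 0] by simp
    moreover have "x 0 < q" "y 0 < q" using x y n by (auto simp: words_def)
    ultimately have "x 0 = y 0" by (rule mod_cancel_aux)
    show "x = y"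
    proof
      fix i show "x i = y i" using fun_cong[OF e, of i] \<open>x 0 = y 0\<close> by (cases "i = 0") auto
    qed
  qed
  have sub: "?S ` ?A \<subseteq> ?B"
  proof
    fix y assume "y \<in> ?S ` ?A"
    then obtain x where x: "x \<in> ?A" and y: "y = ?S x" by blast
    have xw: "x \<in> words q n" using x by simp
    have yw: "y \<in> words q n" using xw y q n by (auto simp: words_def)
    have ym: "\<And>i. i < n \<Longrightarrow> y i mod m = (x i + (if i = 0 then 1 else 0)) mod m"
      using y m(1) by (auto simp: mod_mod_cancel)
    have "(\<Sum>i<n. y i) mod m = (\<Sum>i<n. y i mod m) mod m" by (simp add: mod_sum_eq)
    also have "\<dots> = (\<Sum>i<n. (x i + (if i = 0 then 1 else 0)) mod m) mod m"
    proof -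
      have "(\<Sum>i<n. y i mod m) = (\<Sum>i<n. (x i + (if i = 0 then 1 else 0)) mod m)"
        by (rule sum.cong) (simp_all add: ym)
      thus ?thesis by (rule arg_cong)
    qed
    also have "\<dots> = (\<Sum>i<n. x i + (if i = 0 then 1 else 0)) mod m" by (simp add: mod_sum_eq)
    also have "(\<Sum>i<n. x i + (if i = 0 then 1 else 0)) = (\<Sum>i<n. x i) + 1"
      using n by (simp add: sum.distrib)
    also have "((\<Sum>i<n. x i) + 1) mod m = Suc j mod m"
    proof -
      have "(\<Sum>i<n. x i) mod m = j" using x by simp
      thus ?thesis by (metis Suc_eq_plus1 mod_Suc_eq)
    qed
    finally show "y \<in> ?B" using yw by simp
  qed
  have "finite ?B" using words_card by simp
  hence "card (?S ` ?A) \<le> card ?B" using sub by (rule card_mono)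
  thus ?thesis using card_image[OF inj] by simp
qed

lemma all_equal:
  fixes c :: "nat \<Rightarrow> nat" and m :: nat
  assumes "0 < m" "\<And>j. j < m \<Longrightarrow> c j \<le> c (Suc j mod m)"
  shows "\<And>i j. i < m \<Longrightarrow> j < m \<Longrightarrow> c i = c j"
proof -
  have step: "\<And>k j. j < m \<Longrightarrow> c j \<le> c ((j + k) mod m)"
  proof -
    fix k j assume j: "j < m"
    show "c j \<le> c ((j + k) mod m)"
    proof (induction k)
      case 0 thus ?case using j by simp
    next
      case (Suc k)
      have "c ((j + k) mod m) \<le> c (Suc ((j + k) mod m) mod m)"
        using assms by simp
      also have "Suc ((j + k) mod m) mod m = (j + Suc k) mod m" by (simp add: mod_Suc_eq)
      finally show ?case using Suc by simp
    qed
  qed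
  have le: "c i \<le> c j" if "i < m" "j < m" for i j
  proof -
    have "(i + (j + m - i)) mod m = j" using that by simp
    thus ?thesis using step[OF that(1), of "j + m - i"] by simp
  qed
  fix i j assume "i < m" "j < m"
  thus "c i = c j" using le by (meson antisym)
qed

theorem theorem6:
  fixes q n a h t j :: nat
  assumes "0 < q" "0 < n" "0 < a" "0 < h" "0 < t"
    and "a \<le> q - 1" "h \<le> n" "a \<le> t" "t \<le> a * h"
    and "(t + 1) dvd q"
    and "j \<le> t"
  shows "is_AED q n a h t (sum_code q n t j)
    \<and> (\<forall>C. is_AED q n a h t C \<longrightarrow> card C \<le> card (sum_code q n t j))
    \<and> card (sum_code q n t j) = q ^ n div (t + 1)"
proof -
  let ?m = "t + 1"
  let ?c = "\<lambda>j. card (sum_code q n t j)"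
  have eqc: "\<And>i k. i < ?m \<Longrightarrow> k < ?m \<Longrightarrow> ?c i = ?c k"
    by (rule all_equal[of ?m ?c]) (use shift_le[OF assms(1,2,10)] in \<open>auto simp: sum_code_def\<close>)
  have fin: "finite (words q n)" using words_card by blast
  have U: "words q n = (\<Union>i<?m. sum_code q n t i)"
  proof
    show "words q n \<subseteq> (\<Union>i<?m. sum_code q n t i)"
    proof
      fix x assume "x \<in> words q n"
      hence "x \<in> sum_code q n t ((\<Sum>i<n. x i) mod ?m)" by (simp add: sum_code_def)
      moreover have "(\<Sum>i<n. x i) mod ?m < ?m" by simp
      ultimately show "x \<in> (\<Union>i<?m. sum_code q n t i)" by blast
    qed
  qed (auto simp: sum_code_def)
  have "q ^ n = card (\<Union>i<?m. sum_code q n t i)" by (simp only: U[symmetric] conjunct2[OF words_card])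
  also have "\<dots> = (\<Sum>i<?m. ?c i)"
  proof (rule card_UN_disjoint)
    show "finite {..<?m}" by simp
    show "\<forall>i\<in>{..<?m}. finite (sum_code q n t i)"
    proof
      fix i show "finite (sum_code q n t i)"
        using fin by (rule rev_finite_subset) (auto simp: sum_code_def)
    qed
    show "\<forall>i\<in>{..<?m}. \<forall>k\<in>{..<?m}. i \<noteq> k \<longrightarrow> sum_code q n t i \<inter> sum_code q n t k = {}"
      by (auto simp: sum_code_def)
  qed
  also have "\<dots> = (\<Sum>i<?m. ?c j)"
  proof (rule sum.cong)
    fix i assume "i \<in> {..<?m}"
    thus "?c i = ?c j" using eqc[of i j] assms(11) by simp
  qed simp
  also have "\<dots> = ?m * ?c j" by simp
  finally have qn: "q ^ n = ?m * ?c j" .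
  have dv: "?m * ?c j div ?m = ?c j" by (rule nonzero_mult_div_cancel_left) simp
  have card: "?c j = q ^ n div ?m" by (simp only: qn dv)
  have aed: "is_AED q n a h t (sum_code q n t j)"
    unfolding is_AED_def
  proof (intro conjI ballI impI)
    show "sum_code q n t j \<subseteq> words q n" by (auto simp: sum_code_def)
  next
    fix x y assume x: "x \<in> sum_code q n t j" and y: "y \<in> Out_cyc q n a h t x" and ne: "y \<noteq> x"
    show "y \<notin> sum_code q n t j"
    proof
      assume yc: "y \<in> sum_code q n t j"
      obtain f where f: "f \<in> err_vecs q n a h t" and yf: "y = add_mod q n x f"
        using y unfolding Out_cyc_def by blast
      have ym: "\<And>i. i < n \<Longrightarrow> y i mod ?m = (x i + f i) mod ?m"
        using yf assms(10) by (simp add: add_mod_def mod_mod_cancel)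
      have "(\<Sum>i<n. y i) mod ?m = (\<Sum>i<n. y i mod ?m) mod ?m" by (simp add: mod_sum_eq)
      also have "\<dots> = (\<Sum>i<n. (x i + f i) mod ?m) mod ?m"
      proof -
        have "(\<Sum>i<n. y i mod ?m) = (\<Sum>i<n. (x i + f i) mod ?m)"
        proof (rule sum.cong)
          fix i assume "i \<in> {..<n}"
          thus "y i mod ?m = (x i + f i) mod ?m" by (intro ym) simp
        qed simp
        thus ?thesis by (rule arg_cong)
      qed
      also have "\<dots> = ((\<Sum>i<n. x i) + (\<Sum>i<n. f i)) mod ?m" by (simp add: mod_sum_eq sum.distrib)
      finally have "((\<Sum>i<n. x i) + (\<Sum>i<n. f i)) mod ?m = (\<Sum>i<n. x i) mod ?m"
        using x yc by (simp add: sum_code_def)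
      hence "(\<Sum>i<n. f i) mod ?m = 0" by (rule mod_zero_aux)
      moreover have "(\<Sum>i<n. f i) \<le> t" using f by (simp add: err_vecs_def)
      ultimately have "(\<Sum>i<n. f i) = 0" by simp
      hence f0: "\<And>i. i < n \<Longrightarrow> f i = 0" by simp
      have "y = x"
      proof
        fix i show "y i = x i"
          using x f0 yf by (cases "i < n") (auto simp: add_mod_def sum_code_def words_def)
      qed
      thus False using ne by simp
    qed
  qed
  have opt: "\<forall>C. is_AED q n a h t C \<longrightarrow> card C \<le> card (sum_code q n t j)"
  proof (intro allI impI)
    fix C assume "is_AED q n a h t C"
    hence "?m * card C \<le> q ^ n" using optimal[OF assms(1,6,7,9)] by (simp add: mult.commute)
    hence "?m * card C \<le> ?m * ?c j" by (simp only: qn)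
    thus "card C \<le> card (sum_code q n t j)" by (rule mult_left_le_imp_le) simp
  qed
  show ?thesis using aed opt card by blast
qed

end
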